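(* There exist a Bayes-adaptive MDP $M^+$ and task-dependent behavior policies $[\mu]$ such that, for every batch-constrained meta-policy $\pi^+$: (i) executing $\pi^+$ in $M^+$ visits hyper-states that are not contained in the offline dataset $\mathcal D^+$ (out-of-distribution hyper-states); and (ii) $\big|\mathcal J_{\mathcal D^+}(\pi^+)-\mathcal J_{M^+}(\pi^+)\big|\ge \frac{H^+-1}{2}$.
   Context: Tasks: a distribution $p(\kappa)$ over finite-horizon MDPs $(\mathcal S,\mathcal A,\mathcal R,H,P^\kappa,R^\kappa)$ with common finite spaces, horizon $H$, fixed initial state $s_0$, rewards in $[0,1]$; the agent interacts with one sampled task for $N$ episodes, total horizon $H^+=NH$. The BAMDP $M^+$ has hyper-states $s_t^+=(s_t,b_t)$ with $b_t=p(\kappa\mid c_{:t})$ the Bayesian posterior over tasks given the history $c_{:t}$ of states, actions, rewards; rewards $R^+(r\mid s^+,a)=\mathbb E_{\kappa\sim b}[R^\kappa(r\mid s,a)]$, state transitions $P^+(s'\mid s^+,a)=\mathbb E_{\kappa\sim b}[P^\kappa(s'\mid s,a)]$, beliefs updated by Bayes' rule. $\mathcal J_{M^+}(\pi^+)$ is the expected total reward over the $H^+$ steps when a task is drawn from $p$ and the meta-policy $\pi^+$ (a map from hyper-states to action distributions) is executed. Task-dependent behavior policies $[\mu]=p(\mu\mid\kappa)$ are a conditional distribution over policies given the task; the offline dataset $\mathcal D^+$ consists of trajectories collected by sampling $\kappa\sim p$, $\mu\sim p(\mu\mid\kappa)$ and executing $\mu$ in $\kappa$. A meta-policy is batch-constrained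 if it puts zero probability on actions $a$ at hyper-states $s^+$ whenever $(s^+,a)$ is not contained in $\mathcal D^+$. $\mathcal J_{\mathcal D^+}(\pi^+)$ is the offline (approximate dynamic programming) evaluation: the expected total reward over $H^+$ steps when actions are drawn from $\pi^+$ and rewards and next hyper-states are sampled from the empirical distribution of tuples $(s^+,a,r,s'^+)$ in $\mathcal D^+$. *)

theory Defs
  imports "HOL-Probability.Probability"
begin

text \<open>
  A (task-distribution) BAMDP is given by the initial state, the task prior p(kappa),
  the per-task transition kernels P^kappa and reward distributions R^kappa,
  the episode horizon H and the number of episodes N (total horizon H+ = N H).
\<close>

record bamdp =
  states  :: "nat set"
  actions :: "nat set"
  s0      :: nat
  prior   :: "nat pmf"
  trans   :: "nat \<Rightarrow> nat \<Rightarrow> nat \<Rightarrow> nat pmf"   (* kappa, s, a  ->  P^kappa(. | s,a) *)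
  rew     :: "nat \<Rightarrow> nat \<Rightarrow> nat \<Rightarrow> real pmf"  (* kappa, s, a  ->  R^kappa(. | s,a) *)
  hor     :: nat
  neps    :: nat

definition Hplus :: "bamdp \<Rightarrow> nat" where
  "Hplus M = neps M * hor M"

text \<open>Hyper-states: pairs of an underlying state and a belief over tasks.\<close>
type_synonym hstate = "nat \<times> nat pmf"

text \<open>Task-dependent behaviour policies: for each task a distribution over
  (stationary) policies of the underlying MDP.\<close>
type_synonym behaviour = "nat \<Rightarrow> (nat \<Rightarrow> nat pmf) pmf"

type_synonym metapolicy = "hstate \<Rightarrow> nat pmf"

definition valid_setting :: "bamdp \<Rightarrow> behaviour \<Rightarrow> bool" where
  "valid_setting M mu \<longleftrightarrow>
     finite (states M) \<and> finite (actions M) \<and> actions M \<noteq> {} \<and> s0 M \<in> states M \<and>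
     hor M \<ge> 1 \<and> neps M \<ge> 1 \<and>
     (\<forall>k s a. s \<in> states M \<longrightarrow> a \<in> actions M \<longrightarrow>
         set_pmf (trans M k s a) \<subseteq> states M \<and> set_pmf (rew M k s a) \<subseteq> {0..1}) \<and>
     (\<forall>k pol. pol \<in> set_pmf (mu k) \<longrightarrow> (\<forall>s \<in> states M. set_pmf (pol s) \<subseteq> actions M))"

text \<open>Observation (reward, next state) at global time step t in task k.  At the last
  step of an episode the state is reset to s0 (which carries no information).\<close>
definition obs :: "bamdp \<Rightarrow> nat \<Rightarrow> nat \<Rightarrow> nat \<Rightarrow> nat \<Rightarrow> (real \<times> nat) pmf" where
  "obs M k t s a =
     (if Suc t mod hor M = 0 then map_pmf (\<lambda>r. (r, s0 M)) (rew M k s a)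
      else pair_pmf (rew M k s a) (trans M k s a))"

definition posterior :: "nat pmf \<Rightarrow> (nat \<Rightarrow> 'o pmf) \<Rightarrow> 'o \<Rightarrow> nat pmf" where
  "posterior b L ob =
     map_pmf fst (cond_pmf (bind_pmf b (\<lambda>k. map_pmf (\<lambda>x. (k, x)) (L k))) {y. snd y = ob})"

definition step :: "bamdp \<Rightarrow> nat \<Rightarrow> nat \<Rightarrow> hstate \<Rightarrow> nat \<Rightarrow> (real \<times> hstate) pmf" where
  "step M k t x a =
     map_pmf (\<lambda>(r, s'). (r, (s', posterior (snd x) (\<lambda>k'. obs M k' t (fst x) a) (r, s'))))
             (obs M k t (fst x) a)"

text \<open>True value: n remaining steps, current time t, hidden task k.\<close>
fun Vtrue :: "bamdp \<Rightarrow> metapolicy \<Rightarrow> nat \<Rightarrow> nat \<Rightarrow> nat \<Rightarrow> hstate \<Rightarrow> real" where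
  "Vtrue M \<pi> k 0 t x = 0"
| "Vtrue M \<pi> k (Suc n) t x =
     measure_pmf.expectation (\<pi> x) (\<lambda>a.
       measure_pmf.expectation (step M k t x a) (\<lambda>(r, x'). r + Vtrue M \<pi> k n (Suc t) x'))"

definition J_true :: "bamdp \<Rightarrow> metapolicy \<Rightarrow> real" where
  "J_true M \<pi> = measure_pmf.expectation (prior M)
                   (\<lambda>k. Vtrue M \<pi> k (Hplus M) 0 (s0 M, prior M))"

fun dstate :: "bamdp \<Rightarrow> nat \<Rightarrow> (nat \<Rightarrow> nat pmf) \<Rightarrow> nat \<Rightarrow> hstate pmf" where
  "dstate M k pol 0 = return_pmf (s0 M, prior M)"
| "dstate M k pol (Suc t) =
     bind_pmf (dstate M k pol t) (\<lambda>x. bind_pmf (pol (fst x)) (\<lambda>a. map_pmf snd (step M k t x a)))"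

definition dtuple :: "bamdp \<Rightarrow> nat \<Rightarrow> (nat \<Rightarrow> nat pmf) \<Rightarrow> nat \<Rightarrow> (hstate \<times> nat \<times> real \<times> hstate) pmf" where
  "dtuple M k pol t =
     bind_pmf (dstate M k pol t) (\<lambda>x. bind_pmf (pol (fst x)) (\<lambda>a.
       map_pmf (\<lambda>(r, x'). (x, a, r, x')) (step M k t x a)))"

text \<open>The (idealised, infinite-data) dataset D+: the pooled distribution of all
  transition tuples (s+, a, r, s'+) of trajectories collected with
  k ~ p, mu ~ p(mu | k).\<close>
definition data_dist :: "bamdp \<Rightarrow> behaviour \<Rightarrow> (hstate \<times> nat \<times> real \<times> hstate) pmf" where
  "data_dist M mu =
     bind_pmf (prior M) (\<lambda>k. bind_pmf (mu k) (\<lambda>pol.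
       bind_pmf (pmf_of_set {..<Hplus M}) (\<lambda>t. dtuple M k pol t)))"

definition in_data :: "bamdp \<Rightarrow> behaviour \<Rightarrow> hstate \<Rightarrow> nat \<Rightarrow> bool" where
  "in_data M mu x a \<longleftrightarrow> (\<exists>r x'. (x, a, r, x') \<in> set_pmf (data_dist M mu))"

definition hs_in_data :: "bamdp \<Rightarrow> behaviour \<Rightarrow> hstate \<Rightarrow> bool" where
  "hs_in_data M mu x \<longleftrightarrow> (\<exists>a. in_data M mu x a)"

definition batch_constrained :: "bamdp \<Rightarrow> behaviour \<Rightarrow> metapolicy \<Rightarrow> bool" where
  "batch_constrained M mu \<pi> \<longleftrightarrow>
     (\<forall>x a. hs_in_data M mu x \<longrightarrow> \<not> in_data M mu x a \<longrightarrow> pmf (\<pi> x) a = 0)"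

definition emp :: "bamdp \<Rightarrow> behaviour \<Rightarrow> hstate \<Rightarrow> nat \<Rightarrow> (real \<times> hstate) pmf" where
  "emp M mu x a =
     map_pmf (\<lambda>(_, _, r, x'). (r, x'))
       (cond_pmf (data_dist M mu) {y. fst y = x \<and> fst (snd y) = a})"

fun Voff :: "bamdp \<Rightarrow> behaviour \<Rightarrow> metapolicy \<Rightarrow> nat \<Rightarrow> hstate \<Rightarrow> real" where
  "Voff M mu \<pi> 0 x = 0"
| "Voff M mu \<pi> (Suc n) x =
     measure_pmf.expectation (\<pi> x) (\<lambda>a.
       measure_pmf.expectation (emp M mu x a) (\<lambda>(r, x'). r + Voff M mu \<pi> n x'))"

definition J_off :: "bamdp \<Rightarrow> behaviour \<Rightarrow> metapolicy \<Rightarrow> real" where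
  "J_off M mu \<pi> = Voff M mu \<pi> (Hplus M) (s0 M, prior M)"

inductive visits :: "bamdp \<Rightarrow> metapolicy \<Rightarrow> nat \<Rightarrow> nat \<Rightarrow> hstate \<Rightarrow> bool"
  for M \<pi> k where
  init: "visits M \<pi> k 0 (s0 M, prior M)"
| step_visit: "visits M \<pi> k t x \<Longrightarrow> Suc t < Hplus M \<Longrightarrow> a \<in> set_pmf (\<pi> x) \<Longrightarrow>
         (r, x') \<in> set_pmf (step M k t x a) \<Longrightarrow> visits M \<pi> k (Suc t) x'"

definition visits_ood :: "bamdp \<Rightarrow> behaviour \<Rightarrow> metapolicy \<Rightarrow> bool" where
  "visits_ood M mu \<pi> \<longleftrightarrow>
     (\<exists>k \<in> set_pmf (prior M). \<exists>t x. visits M \<pi> k t x \<and> \<not> hs_in_data M mu x)"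

end

theory Submission
  imports Defs
begin

definition Mc :: "nat \<Rightarrow> bamdp" where
  "Mc Hp = \<lparr> states = {0,1}, actions = {0,1}, s0 = 0, prior = pmf_of_set {0,1},
     trans = (\<lambda>k s a. return_pmf (if s = 0 \<and> a = k then 0 else 1)),
     rew = (\<lambda>k s a. return_pmf (if s = 0 then 1 else 0)),
     hor = Hp, neps = 1 \<rparr>"

definition muc :: behaviour where
  "muc = (\<lambda>k. return_pmf (\<lambda>s. return_pmf (if k = 0 then 0 else 1)))"

definition ob :: "nat \<Rightarrow> nat \<Rightarrow> nat \<Rightarrow> nat \<Rightarrow> nat \<Rightarrow> real \<times> nat" where
  "ob Hp k t s a = ((if s = 0 then 1 else 0),
      (if Suc t mod Hp = 0 then 0 else if s = 0 \<and> a = k then 0 else 1))"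

abbreviation pr :: "nat pmf" where "pr \<equiv> pmf_of_set {0,1}"

lemma Mc_simps[simp]: "states (Mc Hp) = {0,1}" "actions (Mc Hp) = {0,1}" "s0 (Mc Hp) = 0"
  "prior (Mc Hp) = pr" "hor (Mc Hp) = Hp" "neps (Mc Hp) = 1" "Hplus (Mc Hp) = Hp"
  "trans (Mc Hp) k s a = return_pmf (if s = 0 \<and> a = k then 0 else 1)"
  "rew (Mc Hp) k s a = return_pmf (if s = 0 then 1 else 0)"
  by (simp_all add: Mc_def Hplus_def)

lemma set_pr[simp]: "set_pmf pr = {0,1}" by simp

lemma obs_eq: "obs (Mc Hp) k t s a = return_pmf (ob Hp k t s a)"
  unfolding obs_def ob_def by (simp add: pair_return_pmf1)

lemma step_eq: "step (Mc Hp) k t x a = return_pmf (fst (ob Hp k t (fst x) a),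
   (snd (ob Hp k t (fst x) a), posterior (snd x) (\<lambda>k'. return_pmf (ob Hp k' t (fst x) a)) (ob Hp k t (fst x) a)))"
  unfolding step_def obs_eq map_return_pmf by (simp only: case_prod_beta prod.collapse)

lemma cond_single: "set_pmf p \<inter> A = {k} \<Longrightarrow> cond_pmf p A = return_pmf k"
  by (subst set_pmf_subset_singleton[symmetric]) auto

lemma post_det:
  assumes "set_pmf b \<inter> {k. f k = ob0} = {k0}"
  shows "posterior b (\<lambda>k. return_pmf (f k)) ob0 = return_pmf k0"
proof -
  have e: "bind_pmf b (\<lambda>k. map_pmf (\<lambda>x. (k, x)) (return_pmf (f k))) = map_pmf (\<lambda>k. (k, f k)) b"
    unfolding map_pmf_def bind_return_pmf by (rule refl)
  have k0: "k0 \<in> set_pmf b" "f k0 = ob0" using assms by blast+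
  have "set_pmf (map_pmf (\<lambda>k. (k, f k)) b) \<inter> {y. snd y = ob0} = (\<lambda>k. (k, f k)) ` (set_pmf b \<inter> {k. f k = ob0})"
    by (auto simp: set_map_pmf)
  also have "\<dots> = {(k0, ob0)}" unfolding assms using k0 by simp
  finally have c: "set_pmf (map_pmf (\<lambda>k. (k, f k)) b) \<inter> {y. snd y = ob0} = {(k0, ob0)}" .
  have "posterior b (\<lambda>k. return_pmf (f k)) ob0 = map_pmf fst (cond_pmf (map_pmf (\<lambda>k. (k, f k)) b) {y. snd y = ob0})"
    by (simp only: posterior_def e)
  also have "\<dots> = return_pmf k0" by (simp only: cond_single[OF c] map_return_pmf fst_conv)
  finally show ?thesis .
qed


lemma delta_ne_pr: "return_pmf k \<noteq> pr"
proof
  assume "return_pmf k = pr"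
  then have "set_pmf (return_pmf k) = set_pmf pr" by simp
  then show False by auto
qed

lemma post_pr:
  assumes "Suc t mod Hp \<noteq> 0" "a \<in> {0,1}" "k \<in> {0::nat,1}"
  shows "posterior pr (\<lambda>k'. return_pmf (ob Hp k' t 0 a)) (ob Hp k t 0 a) = return_pmf k"
proof (rule post_det)
  show "set_pmf pr \<inter> {k'. ob Hp k' t 0 a = ob Hp k t 0 a} = {k}"
    using assms by (auto simp: ob_def)
qed

lemma post_delta:
  "posterior (return_pmf k) (\<lambda>k'. return_pmf (ob Hp k' t s a)) (ob Hp k t s a) = return_pmf k"
  by (rule post_det) auto

lemma pi_delta:
  assumes sub: "\<forall>x. set_pmf (\<pi> x) \<subseteq> {0,1}"
    and bc: "batch_constrained (Mc Hp) muc \<pi>"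
    and idk: "in_data (Mc Hp) muc x k"
    and only: "\<And>a. in_data (Mc Hp) muc x a \<Longrightarrow> a = k"
  shows "\<pi> x = return_pmf k"
proof -
  have hs: "hs_in_data (Mc Hp) muc x" using idk hs_in_data_def by blast
  have "set_pmf (\<pi> x) \<subseteq> {k}"
  proof
    fix a assume a: "a \<in> set_pmf (\<pi> x)"
    show "a \<in> {k}"
    proof (rule ccontr)
      assume "a \<notin> {k}"
      then have "\<not> in_data (Mc Hp) muc x a" using only by blast
      then have "pmf (\<pi> x) a = 0" using bc hs unfolding batch_constrained_def by blast
      then show False using a by (simp add: set_pmf_eq)
    qed
  qed
  then show ?thesis by (simp add: set_pmf_subset_singleton)
qed

lemma VT_bad:
  "t + n \<le> Hp \<Longrightarrow> Vtrue (Mc Hp) \<pi> k n t (1, b) = 0"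
proof (induction n arbitrary: t b)
  case 0
  then show ?case by simp
next
  case (Suc n)
  have "Vtrue (Mc Hp) \<pi> k n (Suc t) (snd (ob Hp k t 1 a), b') = 0" for a b'
  proof (cases n)
    case 0 then show ?thesis by simp
  next
    case (Suc m)
    with Suc.prems have "Suc t < Hp" by simp
    then have "Suc t mod Hp \<noteq> 0" by simp
    then have "snd (ob Hp k t 1 a) = 1" by (simp add: ob_def)
    then show ?thesis using Suc.IH[of "Suc t" b'] Suc.prems by simp
  qed
  moreover have "fst (ob Hp k t 1 a) = 0" for a by (simp add: ob_def)
  ultimately show ?case by (simp add: step_eq)
qed

lemma VT_good:
  assumes sub: "\<forall>x. set_pmf (\<pi> x) \<subseteq> {0,1}"
    and pd: "\<pi> (0, return_pmf k) = return_pmf k"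
  shows "Vtrue (Mc Hp) \<pi> k n t (0, return_pmf k) = real n"
proof (induction n arbitrary: t)
  case 0
  then show ?case by simp
next
  case (Suc n)
  have "snd (ob Hp k t 0 k) = 0" "fst (ob Hp k t 0 k) = 1" by (simp_all add: ob_def)
  then show ?case using Suc.IH
    by (simp add: pd step_eq post_delta)
qed


definition xt :: "nat \<Rightarrow> nat \<Rightarrow> hstate" where
  "xt k t = (if t = 0 then (0, pr) else (0, return_pmf k))"

lemma step_data:
  assumes "2 \<le> Hp" "k \<in> {0::nat,1}"
  shows "step (Mc Hp) k t (xt k t) k = return_pmf (1, (0, return_pmf k))"
proof -
  have "snd (ob Hp k t 0 k) = 0" "fst (ob Hp k t 0 k) = 1" by (simp_all add: ob_def)
  moreover have "posterior (snd (xt k t)) (\<lambda>k'. return_pmf (ob Hp k' t 0 k)) (ob Hp k t 0 k) = return_pmf k"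
  proof (cases "t = 0")
    case True
    have "Suc 0 mod Hp \<noteq> 0" using assms(1) by simp
    then show ?thesis using True assms post_pr[of 0 Hp k k] by (simp add: xt_def)
  next
    case False
    then show ?thesis by (simp add: xt_def post_delta)
  qed
  moreover have "fst (xt k t) = 0" by (simp add: xt_def)
  ultimately show ?thesis by (simp add: step_eq)
qed

lemma dstate_eq:
  assumes "2 \<le> Hp" "k \<in> {0::nat,1}"
  shows "dstate (Mc Hp) k (\<lambda>s. return_pmf k) t = return_pmf (xt k t)"
proof (induction t)
  case 0
  then show ?case by (simp add: xt_def)
next
  case (Suc t)
  then show ?case using step_data[OF assms, of t]
    by (simp add: bind_return_pmf xt_def)
qed

lemma dtuple_eq:
  assumes "2 \<le> Hp" "k \<in> {0::nat,1}"
  shows "dtuple (Mc Hp) k (\<lambda>s. return_pmf k) t = return_pmf (xt k t, k, 1, (0, return_pmf k))"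
  unfolding dtuple_def using dstate_eq[OF assms] step_data[OF assms]
  by (simp add: bind_return_pmf)

lemma muc_eq: "k \<in> {0::nat,1} \<Longrightarrow> muc k = return_pmf (\<lambda>s. return_pmf k)"
  by (auto simp: muc_def)

lemma data_set:
  assumes "2 \<le> Hp"
  shows "set_pmf (data_dist (Mc Hp) muc) =
    {(x, k, 1, (0, return_pmf k)) | x k. k \<in> {0,1} \<and> (x = (0, pr) \<or> x = (0, return_pmf k))}"
proof -
  have fin: "set_pmf (pmf_of_set {..<Hp}) = {..<Hp}"
  proof (intro set_pmf_of_set)
    show "{..<Hp} \<noteq> {}" using assms by (metis empty_iff lessThan_iff not_numeral_le_zero neq0_conv of_nat_0 of_nat_le_iff)
  qed simp
  have "set_pmf (data_dist (Mc Hp) muc) =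
     (\<Union>k\<in>{0,1}. \<Union>t\<in>{..<Hp}. {(xt k t, k, 1, (0, return_pmf k))})"
    unfolding data_dist_def set_bind_pmf Mc_simps set_pr fin
  proof (rule SUP_cong[OF refl])
    fix k :: nat assume k: "k \<in> {0,1}"
    show "(\<Union>pol\<in>set_pmf (muc k). \<Union>t\<in>{..<Hp}. set_pmf (dtuple (Mc Hp) k pol t)) =
      (\<Union>t\<in>{..<Hp}. {(xt k t, k, 1, (0, return_pmf k))})"
      using k by (simp add: muc_eq dtuple_eq[OF assms])
  qed
  also have "\<dots> = {(x, k, 1, (0, return_pmf k)) | x k. k \<in> {0,1} \<and> (x = (0, pr) \<or> x = (0, return_pmf k))}"
  proof -
    have "\<And>k. (\<Union>t\<in>{..<Hp}. {xt k t}) = {(0, pr), (0, return_pmf k)}"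
    proof -
      fix k
      have "xt k 0 = (0, pr)" "xt k 1 = (0, return_pmf k)" by (simp_all add: xt_def)
      moreover have "0 \<in> {..<Hp}" "1 \<in> {..<Hp}" using assms by auto
      moreover have "(\<Union>t\<in>{..<Hp}. {xt k t}) \<subseteq> {(0, pr), (0, return_pmf k)}"
      proof (rule UN_least)
        fix t show "{xt k t} \<subseteq> {(0, pr), (0, return_pmf k)}" by (cases "t = 0") (simp_all add: xt_def)
      qed
      ultimately show "(\<Union>t\<in>{..<Hp}. {xt k t}) = {(0, pr), (0, return_pmf k)}"
        by (metis (no_types, lifting) UN_I empty_subsetI insert_subset singletonI subset_antisym)
    qed
    then show ?thesis by blast
  qed
  finally show ?thesis .
qed


lemma in_data_iff:
  assumes "2 \<le> Hp"
  shows "in_data (Mc Hp) muc x a \<longleftrightarrow> a \<in> {0,1} \<and> (x = (0, pr) \<or> x = (0, return_pmf a))"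
  unfolding in_data_def data_set[OF assms] by auto

lemma hs_fst:
  assumes "2 \<le> Hp" "hs_in_data (Mc Hp) muc x"
  shows "fst x = 0"
  using assms unfolding hs_in_data_def in_data_iff[OF assms(1)] by auto

lemma emp_eq:
  assumes "2 \<le> Hp" "a \<in> {0::nat,1}" "x = (0, pr) \<or> x = (0, return_pmf a)"
  shows "emp (Mc Hp) muc x a = return_pmf (1, (0, return_pmf a))"
proof -
  have ne: "return_pmf k \<noteq> pr" "pr \<noteq> return_pmf k" for k using delta_ne_pr by metis+
  have "set_pmf (data_dist (Mc Hp) muc) \<inter> {y. fst y = x \<and> fst (snd y) = a} = {(x, a, 1, (0, return_pmf a))}"
    unfolding data_set[OF assms(1)] using assms(2,3) ne by auto
  then show ?thesis unfolding emp_def by (simp add: cond_single)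
qed

lemma Voff_good:
  assumes "2 \<le> Hp" "k \<in> {0::nat,1}" "\<pi> (0, return_pmf k) = return_pmf k"
  shows "Voff (Mc Hp) muc \<pi> n (0, return_pmf k) = real n"
proof (induction n)
  case 0 then show ?case by simp
next
  case (Suc n)
  then show ?case using assms emp_eq[OF assms(1,2), of "(0, return_pmf k)"] by simp
qed

lemma pi_delta2:
  assumes "2 \<le> Hp" "\<forall>x. set_pmf (\<pi> x) \<subseteq> {0,1}" "batch_constrained (Mc Hp) muc \<pi>" "k \<in> {0::nat,1}"
  shows "\<pi> (0, return_pmf k) = return_pmf k"
proof (rule pi_delta[OF assms(2,3)])
  show "in_data (Mc Hp) muc (0, return_pmf k) k" using assms by (simp add: in_data_iff)
  fix a assume "in_data (Mc Hp) muc (0, return_pmf k) a"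
  then show "a = k" using assms(1) delta_ne_pr by (auto simp: in_data_iff)
qed

lemma sum01: "set_pmf p \<subseteq> {0::nat,1} \<Longrightarrow> pmf p 0 + pmf p 1 = 1"
  using sum_pmf_eq_1[of "{0::nat,1}" p] by simp

lemma Joff_eq:
  assumes "2 \<le> Hp" "\<forall>x. set_pmf (\<pi> x) \<subseteq> {0,1}" "batch_constrained (Mc Hp) muc \<pi>"
  shows "J_off (Mc Hp) muc \<pi> = real Hp"
proof -
  obtain m where m: "Hp = Suc m" using assms(1) by (cases Hp) auto
  have inner: "measure_pmf.expectation (emp (Mc Hp) muc (0, pr) a)
      (\<lambda>(r, x'). r + Voff (Mc Hp) muc \<pi> m x') = 1 + real m" if "a \<in> {0,1}" for a
    using that emp_eq[OF assms(1), of a "(0, pr)"] Voff_good[where Hp=Hp and k=a and \<pi>=\<pi>, OF assms(1) that pi_delta2[OF assms that]] by simp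
  have "Voff (Mc Hp) muc \<pi> (Suc m) (0, pr) =
     (\<Sum>a\<in>{0::nat,1}. pmf (\<pi> (0, pr)) a *\<^sub>R measure_pmf.expectation (emp (Mc Hp) muc (0, pr) a)
      (\<lambda>(r, x'). r + Voff (Mc Hp) muc \<pi> m x'))"
    using assms(2) by (simp only: Voff.simps, subst integral_measure_pmf[of "{0,1}"]) auto
  also have "\<dots> = (\<Sum>a\<in>{0::nat,1}. pmf (\<pi> (0, pr)) a *\<^sub>R (1 + real m))"
    by (rule sum.cong[OF refl]) (simp only: inner)
  also have "\<dots> = (pmf (\<pi> (0, pr)) 0 + pmf (\<pi> (0, pr)) 1) * (1 + real m)"
    by (simp add: algebra_simps)
  also have "\<dots> = real Hp" using sum01 assms(2) m by simp
  finally show ?thesis unfolding J_off_def using m by simp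
qed

lemma VT0:
  assumes "2 \<le> Hp" "\<forall>x. set_pmf (\<pi> x) \<subseteq> {0,1}" "batch_constrained (Mc Hp) muc \<pi>" "k \<in> {0::nat,1}"
  shows "Vtrue (Mc Hp) \<pi> k Hp 0 (0, pr) = 1 + real (Hp - 1) * pmf (\<pi> (0, pr)) k"
proof -
  obtain m where m: "Hp = Suc m" using assms(1) by (cases Hp) auto
  have nz: "Suc 0 mod Hp \<noteq> 0" using assms(1) by simp
  have inner: "measure_pmf.expectation (step (Mc Hp) k 0 (0, pr) a)
      (\<lambda>(r, x'). r + Vtrue (Mc Hp) \<pi> k m (Suc 0) x') = 1 + (if a = k then real m else 0)"
    if a: "a \<in> {0,1}" for a
  proof -
    have st: "step (Mc Hp) k 0 (0, pr) a = return_pmf (1, (if a = k then 0 else 1), return_pmf k)"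
      using post_pr[OF nz a assms(4)] nz by (simp add: step_eq ob_def)
    show ?thesis
    proof (cases "a = k")
      case True
      then show ?thesis using st VT_good[OF assms(2) pi_delta2[OF assms]] by simp
    next
      case False
      have "Vtrue (Mc Hp) \<pi> k m (Suc 0) (1, return_pmf k) = 0" using m by (intro VT_bad) simp
      then show ?thesis using st False by simp
    qed
  qed
  have "Vtrue (Mc Hp) \<pi> k (Suc m) 0 (0, pr) =
     (\<Sum>a\<in>{0::nat,1}. pmf (\<pi> (0, pr)) a *\<^sub>R measure_pmf.expectation (step (Mc Hp) k 0 (0, pr) a)
      (\<lambda>(r, x'). r + Vtrue (Mc Hp) \<pi> k m (Suc 0) x'))"
    using assms(2) by (simp only: Vtrue.simps, subst integral_measure_pmf[of "{0,1}"]) auto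
  also have "\<dots> = (\<Sum>a\<in>{0::nat,1}. pmf (\<pi> (0, pr)) a *\<^sub>R (1 + (if a = k then real m else 0)))"
    by (rule sum.cong[OF refl]) (simp only: inner)
  also have "\<dots> = (pmf (\<pi> (0, pr)) 0 + pmf (\<pi> (0, pr)) 1) + real m * pmf (\<pi> (0, pr)) k"
    using assms(4) by (auto simp: algebra_simps)
  also have "\<dots> = 1 + real m * pmf (\<pi> (0, pr)) k" using sum01 assms(2) by simp
  finally show ?thesis using m by simp
qed

lemma Jtrue_eq:
  assumes "2 \<le> Hp" "\<forall>x. set_pmf (\<pi> x) \<subseteq> {0,1}" "batch_constrained (Mc Hp) muc \<pi>"
  shows "J_true (Mc Hp) \<pi> = 1 + real (Hp - 1) / 2"
proof -
  have "J_true (Mc Hp) \<pi> = (\<Sum>k\<in>{0::nat,1}. 1 + real (Hp - 1) * pmf (\<pi> (0, pr)) k) / 2"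
    unfolding J_true_def using VT0[OF assms]
    by (simp add: integral_pmf_of_set)
  also have "\<dots> = (2 + real (Hp - 1) * (pmf (\<pi> (0, pr)) 0 + pmf (\<pi> (0, pr)) 1)) / 2"
    by (simp add: algebra_simps)
  also have "\<dots> = 1 + real (Hp - 1) / 2" using sum01 assms(2) by simp
  finally show ?thesis .
qed


lemma valid: "2 \<le> Hp \<Longrightarrow> valid_setting (Mc Hp) muc"
  unfolding valid_setting_def by (auto simp: muc_def)

lemma ood:
  assumes "2 \<le> Hp" "\<forall>x. set_pmf (\<pi> x) \<subseteq> {0,1}"
  shows "visits_ood (Mc Hp) muc \<pi>"
proof -
  obtain a where a: "a \<in> set_pmf (\<pi> (0, pr))" using set_pmf_not_empty by fastforce
  then have a01: "a \<in> {0,1}" using assms(2) by blast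
  define k where "k = 1 - a"
  have k01: "k \<in> {0,1}" and ak: "a \<noteq> k" using a01 by (auto simp: k_def)
  have nz: "Suc 0 mod Hp \<noteq> 0" using assms(1) by simp
  define x' where "x' = (1::nat, posterior pr (\<lambda>k'. return_pmf (ob Hp k' 0 0 a)) (ob Hp k 0 0 a))"
  have v0: "visits (Mc Hp) \<pi> k 0 (0, pr)" using visits.init[of "Mc Hp" \<pi> k] by simp
  have "(1, x') \<in> set_pmf (step (Mc Hp) k 0 (0, pr) a)"
    using nz ak by (simp add: step_eq ob_def x'_def)
  then have v1: "visits (Mc Hp) \<pi> k 1 x'"
    using visits.step_visit[OF v0 _ a] assms(1) by simp
  have "\<not> hs_in_data (Mc Hp) muc x'" using hs_fst[OF assms(1)] by (force simp: x'_def)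
  then show ?thesis unfolding visits_ood_def
    by (intro bexI[of _ k] exI[of _ 1] exI[of _ x']) (use v1 k01 in simp_all)
qed

theorem proposition1:
  fixes Hp :: nat
  assumes "Hp \<ge> 2"
  shows "\<exists>(M :: bamdp) (mu :: behaviour).
           valid_setting M mu \<and> Hplus M = Hp \<and>
           (\<forall>\<pi> :: metapolicy.
              (\<forall>x. set_pmf (\<pi> x) \<subseteq> actions M) \<longrightarrow> batch_constrained M mu \<pi> \<longrightarrow>
              visits_ood M mu \<pi> \<and>
              \<bar>J_off M mu \<pi> - J_true M \<pi>\<bar> \<ge> (real Hp - 1) / 2)"
proof (intro exI conjI allI impI)
  show "valid_setting (Mc Hp) muc" using valid assms by simp
  show "Hplus (Mc Hp) = Hp" by simp
  fix \<pi> :: metapolicy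
  assume sub: "\<forall>x. set_pmf (\<pi> x) \<subseteq> actions (Mc Hp)" and bc: "batch_constrained (Mc Hp) muc \<pi>"
  then have sub': "\<forall>x. set_pmf (\<pi> x) \<subseteq> {0,1}" by simp
  show "visits_ood (Mc Hp) muc \<pi>" using ood[OF assms sub'] .
  have hr: "real Hp \<ge> 2" using assms by simp
  have "real (Hp - 1) = real Hp - 1" using assms by (simp add: of_nat_diff)
  with hr show "\<bar>J_off (Mc Hp) muc \<pi> - J_true (Mc Hp) \<pi>\<bar> \<ge> (real Hp - 1) / 2"
    using Joff_eq[OF assms sub' bc] Jtrue_eq[OF assms sub' bc] by (simp add: abs_if field_simps)
qed

end
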